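(* Let $X$ be a $T_1$ topological space. The following are equivalent: (1) $T''(X)$ is a regular ring; (2) every prime ideal of $T''(X)$ is maximal; (3) for every $f\in T''(X)$ there exists $g\in T''(X)$ with $Z(f)=X\setminus Z(g)$; (4) for each $Z\in Z''[X]$ there exists a dense cozero set $U$ in $X$ such that $Z\cap U$ is clopen in $U$; (5) every ideal of $T''(X)$ is a $z$-ideal of $T''(X)$; (6) every ideal of $T''(X)$ is an intersection of prime ideals of $T''(X)$; (7) every ideal of $T''(X)$ is an intersection of maximal ideals of $T''(X)$; (8) for all $f,g\in T''(X)$, $\langle f,g\rangle=\langle f^2+g^2\rangle$; (9) every principal ideal of $T''(X)$ is generated by an idempotent.
   Context: $C(X)$ is the ring of real-valued continuous functions on $X$; a cozero set is a set $\{x: h(x)\neq 0\}$ with $h\in C(X)$. $T''(X)$ is the ring (under pointwise operations) of all functions $f\colon X\to\mathbb{R}$ for which there is a dense cozero set $U$ of $X$ with $f|_U$ continuous. For $f\colon X\to\mathbb{R}$, $Z(f)=\{x: f(x)=0\}$, and $Z''[X]=\{Z(f): f\in T''(X)\}$. A commutative ring $R$ is regular if for each $a\in R$ there is $x\in R$ with $a=a^2x$. In a commutative ring with unity, $M(a)$ is the intersection of all maximal ideals containing $a$, and an ideal $I$ is a $z$-ideal if $M(a)\subseteq I$ for all $a\in I$. $\langle\cdot\rangle$ denotes the ideal generated. *)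

theory Defs
  imports "HOL-Analysis.Analysis" "HOL-Algebra.Ideal"
begin

text \<open>The space X is the type 'a (with its topology); X = UNIV.\<close>

definition cozero_set :: "'a::topological_space set \<Rightarrow> bool" where
  "cozero_set U \<longleftrightarrow> (\<exists>h::'a \<Rightarrow> real. continuous_on UNIV h \<and> U = {x. h x \<noteq> 0})"

definition dense_set :: "'a::topological_space set \<Rightarrow> bool" where
  "dense_set U \<longleftrightarrow> closure U = UNIV"

definition Tpp_carrier :: "('a::topological_space \<Rightarrow> real) set" where
  "Tpp_carrier = {f. \<exists>U. cozero_set U \<and> dense_set U \<and> continuous_on U f}"

definition Tpp :: "('a::topological_space \<Rightarrow> real) ring" where
  "Tpp = \<lparr>carrier = Tpp_carrier,
          monoid.mult = (\<lambda>f g x. f x * g x),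
          one = (\<lambda>x. 1),
          zero = (\<lambda>x. 0),
          add = (\<lambda>f g x. f x + g x)\<rparr>"

definition Zset :: "('a \<Rightarrow> real) \<Rightarrow> 'a set" where
  "Zset f = {x. f x = 0}"

definition Zpp :: "'a::topological_space set set" where
  "Zpp = Zset ` Tpp_carrier"

definition regular_ring :: "('b, 'm) ring_scheme \<Rightarrow> bool" where
  "regular_ring R \<longleftrightarrow>
     (\<forall>a \<in> carrier R. \<exists>x \<in> carrier R. a = (a \<otimes>\<^bsub>R\<^esub> a) \<otimes>\<^bsub>R\<^esub> x)"

definition Mset :: "('b, 'm) ring_scheme \<Rightarrow> 'b \<Rightarrow> 'b set" where
  "Mset R a = carrier R \<inter> \<Inter>{M. maximalideal M R \<and> a \<in> M}"

definition z_ideal :: "'b set \<Rightarrow> ('b, 'm) ring_scheme \<Rightarrow> bool" where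
  "z_ideal I R \<longleftrightarrow> ideal I R \<and> (\<forall>a \<in> I. Mset R a \<subseteq> I)"

end

theory Submission
  imports Defs "HOL-Algebra.Ring_Divisibility"
begin


lemma Tpp_simps[simp]:
  "carrier Tpp = Tpp_carrier"
  "a \<otimes>\<^bsub>Tpp\<^esub> b = (\<lambda>x. a x * b x)"
  "\<one>\<^bsub>Tpp\<^esub> = (\<lambda>x. 1)"
  "\<zero>\<^bsub>Tpp\<^esub> = (\<lambda>x. 0)"
  "a \<oplus>\<^bsub>Tpp\<^esub> b = (\<lambda>x. a x + b x)"
  by (simp_all add: Tpp_def)

lemma cozero_open: "cozero_set U \<Longrightarrow> open U"
  unfolding cozero_set_def
  using open_Collect_neq[OF _ continuous_on_const] by blast

lemma dc_Int:
  assumes "cozero_set U" "dense_set U" "cozero_set V" "dense_set V"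
  shows "cozero_set (U \<inter> V) \<and> dense_set (U \<inter> V)"
proof
  obtain h k :: "'a \<Rightarrow> real" where h: "continuous_on UNIV h" "U = {x. h x \<noteq> 0}"
    and k: "continuous_on UNIV k" "V = {x. k x \<noteq> 0}"
    using assms unfolding cozero_set_def by blast
  show "cozero_set (U \<inter> V)" unfolding cozero_set_def
    by (rule exI[of _ "\<lambda>x. h x * k x"]) (auto simp: h k intro: continuous_intros)
  show "dense_set (U \<inter> V)"
    using closure_open_Int_superset[OF cozero_open[OF assms(1)], of V] assms
    unfolding dense_set_def by auto
qed

lemma dc_UNIV: "cozero_set (UNIV::'a::topological_space set)" "dense_set (UNIV::'a set)"
  unfolding cozero_set_def dense_set_def
  by (rule exI[of _ "\<lambda>x. 1::real"], auto)

lemma TppI: "cozero_set U \<Longrightarrow> dense_set U \<Longrightarrow> continuous_on U f \<Longrightarrow> f \<in> Tpp_carrier"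
  unfolding Tpp_carrier_def by blast

lemma TppE: "f \<in> Tpp_carrier \<Longrightarrow> (\<And>U. cozero_set U \<Longrightarrow> dense_set U \<Longrightarrow> continuous_on U f \<Longrightarrow> P) \<Longrightarrow> P"
  unfolding Tpp_carrier_def by blast

lemma Tpp_const[simp]: "(\<lambda>x. c) \<in> Tpp_carrier"
  using dc_UNIV by (intro TppI[of UNIV]) auto

lemma Tpp_binop:
  assumes "f \<in> Tpp_carrier" "g \<in> Tpp_carrier"
    and "\<And>U. continuous_on U f \<Longrightarrow> continuous_on U g \<Longrightarrow> continuous_on U h"
  shows "h \<in> Tpp_carrier"
proof -
  obtain U V where U: "cozero_set U" "dense_set U" "continuous_on U f"
    and V: "cozero_set V" "dense_set V" "continuous_on V g"
    using assms(1,2) by (metis TppE)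
  show ?thesis
    using dc_Int[OF U(1,2) V(1,2)] assms(3) U(3) V(3)
    by (meson TppI continuous_on_subset inf_le1 inf_le2)
qed

lemma Tpp_add[simp]: "f \<in> Tpp_carrier \<Longrightarrow> g \<in> Tpp_carrier \<Longrightarrow> (\<lambda>x. f x + g x) \<in> Tpp_carrier"
  by (erule Tpp_binop, assumption) (intro continuous_intros)
lemma Tpp_diff[simp]: "f \<in> Tpp_carrier \<Longrightarrow> g \<in> Tpp_carrier \<Longrightarrow> (\<lambda>x. f x - g x) \<in> Tpp_carrier"
  by (erule Tpp_binop, assumption) (intro continuous_intros)
lemma Tpp_mult[simp]: "f \<in> Tpp_carrier \<Longrightarrow> g \<in> Tpp_carrier \<Longrightarrow> (\<lambda>x. f x * g x) \<in> Tpp_carrier"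
  by (erule Tpp_binop, assumption) (intro continuous_intros)
lemma Tpp_uminus[simp]: "f \<in> Tpp_carrier \<Longrightarrow> (\<lambda>x. - f x) \<in> Tpp_carrier"
  by (erule Tpp_binop, rule Tpp_const) (intro continuous_intros)
lemma Tpp_inverse:
  assumes "f \<in> Tpp_carrier" "\<And>x. f x \<noteq> 0" shows "(\<lambda>x. inverse (f x)) \<in> Tpp_carrier"
  using assms(1) Tpp_const by (rule Tpp_binop) (auto intro!: continuous_intros assms(2))

lemma cring_Tpp: "cring (Tpp :: ('a::topological_space \<Rightarrow> real) ring)"
proof (rule cringI)
  show "abelian_group (Tpp :: ('a::topological_space \<Rightarrow> real) ring)"
    by (rule abelian_groupI) (auto simp: algebra_simps intro!: bexI[of _ "\<lambda>x. - _ x"])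
  show "comm_monoid (Tpp :: ('a::topological_space \<Rightarrow> real) ring)"
    by (rule comm_monoidI) (auto simp: algebra_simps)
qed (auto simp: algebra_simps)



lemma set_add_iff: "y \<in> H <+>\<^bsub>G\<^esub> K \<longleftrightarrow> (\<exists>h\<in>H. \<exists>k\<in>K. y = h \<oplus>\<^bsub>G\<^esub> k)"
  unfolding set_add_def' by blast

lemma PIdl_iff: "y \<in> PIdl\<^bsub>G\<^esub> a \<longleftrightarrow> (\<exists>x\<in>carrier G. y = x \<otimes>\<^bsub>G\<^esub> a)"
  unfolding cgenideal_def by blast

lemma (in cring) zorn_prime:
  assumes I: "ideal I R" and S: "S \<subseteq> carrier R" "\<one> \<in> S" "\<And>a b. a \<in> S \<Longrightarrow> b \<in> S \<Longrightarrow> a \<otimes> b \<in> S"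
    and disj: "I \<inter> S = {}"
  shows "\<exists>Q. primeideal Q R \<and> I \<subseteq> Q \<and> Q \<inter> S = {}"
proof -
  define A where "A = {J. ideal J R \<and> I \<subseteq> J \<and> J \<inter> S = {}}"
  have "\<exists>M\<in>A. \<forall>X\<in>A. M \<subseteq> X \<longrightarrow> X = M"
  proof (rule subset_Zorn_nonempty)
    have "I \<in> A" using I disj unfolding A_def by simp
    then show "A \<noteq> {}" by blast
    fix C assume C: "C \<noteq> {}" "subset.chain A C"
    have CA: "C \<subseteq> A" and tot: "\<And>X Y. X \<in> C \<Longrightarrow> Y \<in> C \<Longrightarrow> X \<subseteq> Y \<or> Y \<subseteq> X"
      using C(2) unfolding subset_chain_def by auto
    have "subset.chain {I. ideal I R} C" unfolding subset_chain_def
      using CA tot unfolding A_def by blast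
    from chain_Union_is_ideal[OF this] C(1) have iU: "ideal (\<Union>C) R" by simp
    obtain X0 where X0: "X0 \<in> C" using C(1) by blast
    have "I \<subseteq> \<Union>C" using X0 CA unfolding A_def by auto
    moreover have "\<Union>C \<inter> S = {}" using CA unfolding A_def by auto
    ultimately show "\<Union>C \<in> A" using iU unfolding A_def by simp
  qed
  then obtain M where MA: "M \<in> A" and Mm: "\<forall>X\<in>A. M \<subseteq> X \<longrightarrow> X = M" by blast
  have M: "ideal M R" "I \<subseteq> M" "M \<inter> S = {}" using MA unfolding A_def by auto
  have Mmax: "X = M" if "ideal X R" "I \<subseteq> X" "X \<inter> S = {}" "M \<subseteq> X" for X
    using Mm that unfolding A_def by simp
  have ext: "\<exists>m\<in>M. \<exists>x\<in>carrier R. m \<oplus> x \<otimes> a \<in> S" if a: "a \<in> carrier R" "a \<notin> M" for a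
  proof (rule ccontr)
    assume nex: "\<not> ?thesis"
    have id: "ideal (M <+>\<^bsub>R\<^esub> PIdl a) R" by (rule add_ideals[OF M(1) cgenideal_ideal[OF a(1)]])
    have sub: "M \<subseteq> M <+>\<^bsub>R\<^esub> PIdl a"
    proof
      fix m assume "m \<in> M"
      moreover have z: "\<zero> \<in> PIdl a" unfolding PIdl_iff by (rule bexI[of _ \<zero>]) (use a in simp_all)
      moreover have "m = m \<oplus> \<zero>" using \<open>m \<in> M\<close> ideal.Icarr[OF M(1)] by simp
      ultimately show "m \<in> M <+>\<^bsub>R\<^esub> PIdl a" unfolding set_add_iff by blast
    qed
    have ny: "y \<notin> S" if y: "y \<in> M <+>\<^bsub>R\<^esub> PIdl a" for y
    proof -
      from y obtain m k where mk: "m \<in> M" "k \<in> PIdl a" "y = m \<oplus> k" unfolding set_add_iff by blast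
      from mk(2) obtain x where x: "x \<in> carrier R" "k = x \<otimes> a" unfolding PIdl_iff by blast
      show ?thesis using nex mk(1,3) x by blast
    qed
    have dj: "(M <+>\<^bsub>R\<^esub> PIdl a) \<inter> S = {}" using ny by blast
    have "M <+>\<^bsub>R\<^esub> PIdl a = M"
      by (rule Mmax[OF id _ dj sub]) (use M(2) sub in blast)
    moreover have "a \<in> M <+>\<^bsub>R\<^esub> PIdl a"
    proof -
      have "a = \<zero> \<oplus> \<one> \<otimes> a" using a by simp
      moreover have "\<zero> \<in> M" using M(1) by (simp add: additive_subgroup.zero_closed ideal.axioms(1))
      moreover have "\<one> \<otimes> a \<in> PIdl a" unfolding PIdl_iff by (rule bexI[of _ \<one>]) simp_all
      ultimately show ?thesis unfolding set_add_iff by blast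
    qed
    ultimately show False using a(2) by simp
  qed
  have "primeideal M R"
  proof (rule primeidealI[OF M(1) is_cring])
    show "carrier R \<noteq> M" using M(3) S by blast
    fix a b assume ab: "a \<in> carrier R" "b \<in> carrier R" "a \<otimes> b \<in> M"
    show "a \<in> M \<or> b \<in> M"
    proof (rule ccontr)
      assume "\<not> ?thesis"
      then have na: "a \<notin> M" and nb: "b \<notin> M" by auto
      obtain m1 x1 where h1: "m1 \<in> M" "x1 \<in> carrier R" "m1 \<oplus> x1 \<otimes> a \<in> S"
        using ext[OF ab(1) na] by blast
      obtain m2 x2 where h2: "m2 \<in> M" "x2 \<in> carrier R" "m2 \<oplus> x2 \<otimes> b \<in> S"
        using ext[OF ab(2) nb] by blast
      note h = h1 h2
      have c: "m1 \<in> carrier R" "m2 \<in> carrier R" using h ideal.Icarr[OF M(1)] by auto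
      let ?s2 = "m2 \<oplus> x2 \<otimes> b"
      have s2c: "?s2 \<in> carrier R" using c h ab by simp
      have e0: "(x1 \<otimes> a) \<otimes> (x2 \<otimes> b) = (x1 \<otimes> x2) \<otimes> (a \<otimes> b)"
      proof -
        have "(x1 \<otimes> a) \<otimes> (x2 \<otimes> b) = x1 \<otimes> (a \<otimes> (x2 \<otimes> b))"
          using h(2,5) ab(1,2) by (intro m_assoc) auto
        also have "a \<otimes> (x2 \<otimes> b) = x2 \<otimes> (a \<otimes> b)"
          using h(5) ab(1,2) by (intro m_lcomm) auto
        also have "x1 \<otimes> (x2 \<otimes> (a \<otimes> b)) = (x1 \<otimes> x2) \<otimes> (a \<otimes> b)"
          using h(2,5) ab(1,2) by (intro m_assoc[symmetric]) auto
        finally show ?thesis .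
      qed
      have e1: "(m1 \<oplus> x1 \<otimes> a) \<otimes> ?s2 = m1 \<otimes> ?s2 \<oplus> ((x1 \<otimes> a) \<otimes> m2 \<oplus> (x1 \<otimes> x2) \<otimes> (a \<otimes> b))"
      proof -
        have "(m1 \<oplus> x1 \<otimes> a) \<otimes> ?s2 = m1 \<otimes> ?s2 \<oplus> (x1 \<otimes> a) \<otimes> ?s2"
          using c h ab s2c by (intro l_distr) auto
        also have "(x1 \<otimes> a) \<otimes> ?s2 = (x1 \<otimes> a) \<otimes> m2 \<oplus> (x1 \<otimes> a) \<otimes> (x2 \<otimes> b)"
          using c h ab by (intro r_distr) auto
        finally show ?thesis unfolding e0 .
      qed
      have "m1 \<otimes> ?s2 \<in> M" using ideal.I_r_closed[OF M(1) h(1) s2c] .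
      moreover have "(x1 \<otimes> a) \<otimes> m2 \<in> M" using ideal.I_l_closed[OF M(1) h(4)] h ab by simp
      moreover have "(x1 \<otimes> x2) \<otimes> (a \<otimes> b) \<in> M" using ideal.I_l_closed[OF M(1) ab(3)] h by simp
      ultimately have "(m1 \<oplus> x1 \<otimes> a) \<otimes> ?s2 \<in> M" unfolding e1
        using M(1) by (meson additive_subgroup.a_closed ideal.axioms(1))
      moreover have "(m1 \<oplus> x1 \<otimes> a) \<otimes> ?s2 \<in> S" using S(3) h by blast
      ultimately show False using M(3) by blast
    qed
  qed
  then show ?thesis using M by blast
qed



abbreviation "TC \<equiv> Tpp_carrier"

lemma idl_zero: "ideal I (Tpp::('a::topological_space \<Rightarrow> real) ring) \<Longrightarrow> (\<lambda>x. 0) \<in> I"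
  using additive_subgroup.zero_closed[OF ideal.axioms(1), of I Tpp] by simp
lemma idl_add: "ideal I (Tpp::('a::topological_space \<Rightarrow> real) ring) \<Longrightarrow> a \<in> I \<Longrightarrow> b \<in> I \<Longrightarrow> (\<lambda>x. a x + b x) \<in> I"
  using additive_subgroup.a_closed[OF ideal.axioms(1), of I Tpp a b] by simp
lemma idl_lmult: "ideal I (Tpp::('a::topological_space \<Rightarrow> real) ring) \<Longrightarrow> a \<in> I \<Longrightarrow> r \<in> Tpp_carrier \<Longrightarrow> (\<lambda>x. r x * a x) \<in> I"
  using ideal.I_l_closed[of I Tpp a r] by simp
lemma idl_rmult: "ideal I (Tpp::('a::topological_space \<Rightarrow> real) ring) \<Longrightarrow> a \<in> I \<Longrightarrow> r \<in> Tpp_carrier \<Longrightarrow> (\<lambda>x. a x * r x) \<in> I"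
  using ideal.I_r_closed[of I Tpp a r] by simp
lemma idl_carr: "ideal I (Tpp::('a::topological_space \<Rightarrow> real) ring) \<Longrightarrow> a \<in> I \<Longrightarrow> a \<in> Tpp_carrier"
  using ideal.Icarr[of I Tpp a] by simp

lemma regE: "regular_ring (Tpp::('a::topological_space \<Rightarrow> real) ring) \<Longrightarrow> (f::'a \<Rightarrow> real) \<in> Tpp_carrier \<Longrightarrow>
   \<exists>x\<in>Tpp_carrier. \<forall>t. f t = f t * f t * x t"
  unfolding regular_ring_def Tpp_simps fun_eq_iff by blast

lemma regI: "(\<And>f::'a::topological_space \<Rightarrow> real. f \<in> Tpp_carrier \<Longrightarrow> \<exists>x\<in>Tpp_carrier. \<forall>t. f t = f t * f t * x t) \<Longrightarrow>
   regular_ring (Tpp::('a::topological_space \<Rightarrow> real) ring)"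
  unfolding regular_ring_def Tpp_simps fun_eq_iff by blast

lemma C13: "regular_ring (Tpp::('a::topological_space \<Rightarrow> real) ring) \<longleftrightarrow>
   (\<forall>f\<in>Tpp_carrier::('a \<Rightarrow> real) set. \<exists>g\<in>Tpp_carrier. Zset f = UNIV - Zset g)"
proof
  assume r: "regular_ring (Tpp::('a::topological_space \<Rightarrow> real) ring)"
  show "\<forall>f\<in>Tpp_carrier::('a \<Rightarrow> real) set. \<exists>g\<in>Tpp_carrier. Zset f = UNIV - Zset g"
  proof
    fix f :: "'a \<Rightarrow> real" assume f: "f \<in> Tpp_carrier"
    obtain x where x: "x \<in> Tpp_carrier" "\<And>t. f t = f t * f t * x t" using regE[OF r f] by blast
    have key: "\<And>t. f t \<noteq> 0 \<Longrightarrow> f t * x t = 1" using x(2)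
        by (metis mult.assoc mult_left_cancel mult.right_neutral)
    have "Zset f = UNIV - Zset (\<lambda>t. 1 - f t * x t)"
      using key by (auto simp: Zset_def)
    then show "\<exists>g\<in>Tpp_carrier. Zset f = UNIV - Zset g" using f x by auto
  qed
next
  assume c: "\<forall>f\<in>Tpp_carrier::('a \<Rightarrow> real) set. \<exists>g\<in>Tpp_carrier. Zset f = UNIV - Zset g"
  show "regular_ring (Tpp::('a::topological_space \<Rightarrow> real) ring)"
  proof (rule regI)
    fix f :: "'a \<Rightarrow> real" assume f: "f \<in> Tpp_carrier"
    obtain g where g: "g \<in> Tpp_carrier" "Zset f = UNIV - Zset g" using c f by blast
    have gz: "\<And>t. f t = 0 \<longleftrightarrow> g t \<noteq> 0" using g(2) unfolding Zset_def by (auto simp: set_eq_iff)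
    have nz: "\<And>t. f t + g t \<noteq> 0" using gz by (metis add.right_neutral add_0)
    have i1: "(\<lambda>t. inverse (f t + g t)) \<in> Tpp_carrier" using Tpp_inverse[OF Tpp_add[OF f g(1)] nz] .
    have i2: "\<forall>t. f t = f t * f t * inverse (f t + g t)"
    proof
      fix t show "f t = f t * f t * inverse (f t + g t)"
        using gz[of t] by (cases "f t = 0") (auto simp: field_simps)
    qed
    show "\<exists>x\<in>Tpp_carrier. \<forall>t. f t = f t * f t * x t"
      by (rule bexI[OF _ i1]) (rule i2)
  qed
qed

lemma C34: "(\<forall>f\<in>Tpp_carrier::('a::topological_space \<Rightarrow> real) set. \<exists>g\<in>Tpp_carrier. Zset f = UNIV - Zset g)
  \<longleftrightarrow> (\<forall>Z \<in> (Zpp :: 'a set set). \<exists>U::'a set. cozero_set U \<and> dense_set U \<and>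
                 openin (top_of_set U) (Z \<inter> U) \<and> closedin (top_of_set U) (Z \<inter> U))"
proof
  assume c: "\<forall>f\<in>Tpp_carrier::('a::topological_space \<Rightarrow> real) set. \<exists>g\<in>Tpp_carrier. Zset f = UNIV - Zset g"
  show "\<forall>Z \<in> (Zpp :: 'a set set). \<exists>U::'a set. cozero_set U \<and> dense_set U \<and>
                 openin (top_of_set U) (Z \<inter> U) \<and> closedin (top_of_set U) (Z \<inter> U)"
  proof
    fix Z :: "'a set" assume "Z \<in> Zpp"
    then obtain f where f: "f \<in> Tpp_carrier" "Z = Zset f" unfolding Zpp_def by blast
    obtain g where g: "g \<in> Tpp_carrier" "Zset f = UNIV - Zset g" using c f by blast
    obtain U1 where U1: "cozero_set U1" "dense_set U1" "continuous_on U1 f" using f(1) by (metis TppE)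
    obtain U2 where U2: "cozero_set U2" "dense_set U2" "continuous_on U2 g" using g(1) by (metis TppE)
    define U where "U = U1 \<inter> U2"
    have U: "cozero_set U" "dense_set U" using dc_Int[OF U1(1,2) U2(1,2)] U_def by auto
    have cf: "continuous_on U f" "continuous_on U g" using U1 U2 U_def continuous_on_subset by blast+
    have e1: "Z \<inter> U = {x \<in> U. f x = 0}" using f(2) by (auto simp: Zset_def)
    have e2: "Z \<inter> U = U \<inter> g -` (-{0})" using f(2) g(2) by (auto simp: Zset_def)
    have "closedin (top_of_set U) (Z \<inter> U)" unfolding e1 by (rule continuous_closedin_preimage_constant[OF cf(1)])
    moreover have "openin (top_of_set U) (Z \<inter> U)" unfolding e2
      by (rule continuous_openin_preimage_gen[OF cf(2)]) auto
    ultimately show "\<exists>U::'a set. cozero_set U \<and> dense_set U \<and>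
                 openin (top_of_set U) (Z \<inter> U) \<and> closedin (top_of_set U) (Z \<inter> U)" using U by blast
  qed
next
  assume c: "\<forall>Z \<in> (Zpp :: 'a set set). \<exists>U::'a set. cozero_set U \<and> dense_set U \<and>
                 openin (top_of_set U) (Z \<inter> U) \<and> closedin (top_of_set U) (Z \<inter> U)"
  show "\<forall>f\<in>Tpp_carrier::('a::topological_space \<Rightarrow> real) set. \<exists>g\<in>Tpp_carrier. Zset f = UNIV - Zset g"
  proof
    fix f :: "'a \<Rightarrow> real" assume f: "f \<in> Tpp_carrier"
    define Z where "Z = Zset f"
    have "Z \<in> Zpp" using f unfolding Zpp_def Z_def by blast
    then obtain U where U: "cozero_set U" "dense_set U" "openin (top_of_set U) (Z \<inter> U)"
       "closedin (top_of_set U) (Z \<inter> U)" using c by blast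
    have cl2: "closedin (top_of_set U) (U - Z)"
    proof -
      have "closedin (top_of_set U) (U - (Z \<inter> U))"
        using closedin_diff[OF closedin_topspace U(3)] by simp
      moreover have "U - (Z \<inter> U) = U - Z" by blast
      ultimately show ?thesis by simp
    qed
    define g where "g = (\<lambda>x. if f x = 0 then (1::real) else 0)"
    have eq: "(Z \<inter> U) \<union> (U - Z) = U" by blast
    have h1: "closedin (top_of_set ((Z \<inter> U) \<union> (U - Z))) (Z \<inter> U)" using U(4) eq by simp
    have h2: "closedin (top_of_set ((Z \<inter> U) \<union> (U - Z))) (U - Z)" using cl2 eq by simp
    have "continuous_on ((Z \<inter> U) \<union> (U - Z)) g" unfolding g_def
      by (rule continuous_on_cases_local[OF h1 h2]) (auto simp: Z_def Zset_def)
    moreover note eq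
    ultimately have "continuous_on U g" by simp
    then have "g \<in> Tpp_carrier" using U by (metis TppI)
    moreover have "Zset f = UNIV - Zset g" by (auto simp: g_def Zset_def)
    ultimately show "\<exists>g\<in>Tpp_carrier. Zset f = UNIV - Zset g" by blast
  qed
qed

lemma reg_prime_max:
  assumes r: "regular_ring (Tpp::('a::topological_space \<Rightarrow> real) ring)" and P: "primeideal P Tpp"
  shows "maximalideal P (Tpp::('a::topological_space \<Rightarrow> real) ring)"
proof (rule maximalidealI)
  show iP: "ideal P Tpp" using P primeideal.axioms(1) by blast
  show "carrier Tpp \<noteq> P" using P primeideal.I_notcarr by blast
  fix J assume J: "ideal J (Tpp::('a::topological_space \<Rightarrow> real) ring)" "P \<subseteq> J" "J \<subseteq> carrier Tpp"
  show "J = P \<or> J = carrier Tpp"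
  proof (rule ccontr)
    assume ne: "\<not> ?thesis"
    then obtain a where a: "a \<in> J" "a \<notin> P" using J by blast
    have ac: "a \<in> Tpp_carrier" using a J by auto
    obtain x where x: "x \<in> Tpp_carrier" "\<And>t. a t = a t * a t * x t" using regE[OF r ac] by blast
    define u where "u = (\<lambda>t. 1 - a t * x t)"
    have uc: "u \<in> Tpp_carrier" using ac x unfolding u_def by simp
    have "a t * (1 - a t * x t) = 0" for t
    proof -
      have "a t * (1 - a t * x t) = a t - a t * a t * x t" by (simp add: algebra_simps)
      also have "\<dots> = 0" using x(2)[of t] by linarith
      finally show ?thesis .
    qed
    then have "a \<otimes>\<^bsub>Tpp\<^esub> u = \<zero>\<^bsub>Tpp\<^esub>"
      by (simp add: u_def fun_eq_iff)
    then have "a \<otimes>\<^bsub>Tpp\<^esub> u \<in> P" using iP idl_zero by simp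
    then have "u \<in> P" using primeideal.I_prime[OF P, of a u] ac uc a by auto
    then have "u \<in> J" using J by blast
    moreover have "(\<lambda>t. a t * x t) \<in> J" by (rule idl_rmult[OF J(1) a(1) x(1)])
    ultimately have s1: "(\<lambda>t. u t + a t * x t) \<in> J" by (rule idl_add[OF J(1)])
    have s2: "(\<lambda>t. u t + a t * x t) = \<one>\<^bsub>Tpp\<^esub>" by (simp add: u_def)
    have "\<one>\<^bsub>Tpp\<^esub> \<in> J" using s1 unfolding s2 .
    then have "J = carrier Tpp" by (rule ideal.one_imp_carrier[OF J(1)])
    moreover have "J \<noteq> carrier Tpp" using ne by blast
    ultimately show False by contradiction
  qed
qed



lemma C21:
  assumes c2: "\<forall>P. primeideal P (Tpp::('a::topological_space \<Rightarrow> real) ring) \<longrightarrow> maximalideal P Tpp"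
  shows "regular_ring (Tpp::('a \<Rightarrow> real) ring)"
proof (rule regI)
  interpret R: cring "Tpp::('a \<Rightarrow> real) ring" by (rule cring_Tpp)
  fix f :: "'a \<Rightarrow> real" assume f: "f \<in> Tpp_carrier"
  show "\<exists>x\<in>TC. \<forall>t. f t = f t * f t * x t"
  proof (rule ccontr)
    assume nreg: "\<not> (\<exists>x\<in>TC. \<forall>t. f t = f t * f t * x t)"
    define Ann where "Ann = {x \<in> carrier (Tpp::('a \<Rightarrow> real) ring). f \<otimes>\<^bsub>Tpp\<^esub> x \<in> {\<zero>\<^bsub>Tpp\<^esub>}}"
    have iAnn: "ideal Ann Tpp" unfolding Ann_def
      by (rule ideal.helper_max_prime[OF R.zeroideal cring_Tpp]) (simp add: f)
    have Ann_iff: "s \<in> Ann \<longleftrightarrow> s \<in> TC \<and> (\<forall>t. f t * s t = 0)" for s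
      unfolding Ann_def by (auto simp: fun_eq_iff)
    define J where "J = PIdl\<^bsub>Tpp\<^esub> f <+>\<^bsub>Tpp\<^esub> Ann"
    have iJ: "ideal J Tpp" unfolding J_def
      by (rule R.add_ideals[OF R.cgenideal_ideal iAnn]) (simp add: f)
    have J_iff: "g \<in> J \<longleftrightarrow> (\<exists>r\<in>TC. \<exists>s\<in>Ann. g = (\<lambda>t. r t * f t + s t))" for g
    proof
      assume "g \<in> J"
      then obtain h k where hk: "h \<in> PIdl\<^bsub>Tpp\<^esub> f" "k \<in> Ann" "g = h \<oplus>\<^bsub>Tpp\<^esub> k"
        unfolding J_def set_add_iff by blast
      from hk(1) obtain r where r: "r \<in> carrier Tpp" "h = r \<otimes>\<^bsub>Tpp\<^esub> f" unfolding PIdl_iff by blast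
      show "\<exists>r\<in>TC. \<exists>s\<in>Ann. g = (\<lambda>t. r t * f t + s t)" using hk r by auto
    next
      assume "\<exists>r\<in>TC. \<exists>s\<in>Ann. g = (\<lambda>t. r t * f t + s t)"
      then obtain r s where rs: "r \<in> TC" "s \<in> Ann" "g = (\<lambda>t. r t * f t + s t)" by blast
      have "r \<otimes>\<^bsub>Tpp\<^esub> f \<in> PIdl\<^bsub>Tpp\<^esub> f" unfolding PIdl_iff using rs(1) by auto
      moreover have "g = (r \<otimes>\<^bsub>Tpp\<^esub> f) \<oplus>\<^bsub>Tpp\<^esub> s" using rs(3) by simp
      ultimately show "g \<in> J" unfolding J_def set_add_iff using rs(2) by blast
    qed
    have fJ: "f \<in> J" unfolding J_iff
      by (rule bexI[of _ "\<lambda>t. 1"], rule bexI[of _ "\<lambda>t. 0"]) (auto simp: Ann_iff)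
    have AJ: "Ann \<subseteq> J"
    proof
      fix s assume s: "s \<in> Ann"
      show "s \<in> J" unfolding J_iff
        by (rule bexI[of _ "\<lambda>t. 0"], rule bexI[of _ s]) (use s in auto)
    qed
    have oneJ: "(\<lambda>t. 1) \<notin> J"
    proof
      assume "(\<lambda>t. 1) \<in> J"
      then obtain r s where r: "r \<in> TC" "\<forall>t. f t * s t = 0" "(\<lambda>t. 1::real) = (\<lambda>t. r t * f t + s t)"
        using J_iff Ann_iff by blast
      have "\<forall>t. f t = f t * f t * r t"
      proof
        fix t
        have "1 = r t * f t + s t" using fun_cong[OF r(3), of t] by simp
        then have "f t = f t * (r t * f t + s t)" by simp
        also have "\<dots> = f t * f t * r t + f t * s t" by (simp add: algebra_simps)
        also have "\<dots> = f t * f t * r t" using r(2) by simp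
        finally show "f t = f t * f t * r t" .
      qed
      then show False using nreg r(1) by blast
    qed
    have "\<exists>P. primeideal P Tpp \<and> J \<subseteq> P \<and> P \<inter> {\<one>\<^bsub>Tpp\<^esub>} = {}"
      by (rule R.zorn_prime[OF iJ]) (use oneJ in auto)
    then obtain P where P: "primeideal P Tpp" "J \<subseteq> P" "(\<lambda>t. 1) \<notin> P" by auto
    define S where "S = {g \<in> TC. \<exists>s\<in>TC. s \<notin> P \<and> (\<forall>t. s t * f t \<noteq> 0 \<longrightarrow> g t \<noteq> 0)}"
    have "\<exists>Q. primeideal Q Tpp \<and> {\<zero>\<^bsub>Tpp\<^esub>} \<subseteq> Q \<and> Q \<inter> S = {}"
    proof (rule R.zorn_prime[OF R.zeroideal])
      show "S \<subseteq> carrier Tpp" unfolding S_def by auto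
      show "\<one>\<^bsub>Tpp\<^esub> \<in> S" unfolding S_def using P(3) by (auto intro!: bexI[of _ "\<lambda>t. 1"])
      show "a \<otimes>\<^bsub>Tpp\<^esub> b \<in> S" if aS: "a \<in> S" and bS: "b \<in> S" for a b
      proof -
        obtain s1 where s1: "s1 \<in> TC" "s1 \<notin> P" "\<forall>t. s1 t * f t \<noteq> 0 \<longrightarrow> a t \<noteq> 0" "a \<in> TC"
          using aS S_def by auto
        obtain s2 where s2: "s2 \<in> TC" "s2 \<notin> P" "\<forall>t. s2 t * f t \<noteq> 0 \<longrightarrow> b t \<noteq> 0" "b \<in> TC"
          using bS S_def by auto
        have "s1 \<otimes>\<^bsub>Tpp\<^esub> s2 \<notin> P" using primeideal.I_prime[OF P(1), of s1 s2] s1 s2 by auto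
        then have "(\<lambda>t. s1 t * s2 t) \<notin> P" by simp
        moreover have "\<forall>t. s1 t * s2 t * f t \<noteq> 0 \<longrightarrow> a t * b t \<noteq> 0" using s1(3) s2(3) by auto
        ultimately show ?thesis unfolding S_def using s1 s2 by (auto intro!: bexI[of _ "\<lambda>t. s1 t * s2 t"])
      qed
      have "(\<lambda>t. 0) \<notin> S"
      proof
        assume "(\<lambda>t. 0) \<in> S"
        then obtain s where s: "s \<in> TC" "s \<notin> P" "\<forall>t. s t * f t = 0" unfolding S_def by auto
        then have "s \<in> Ann" using Ann_iff by (auto simp: mult.commute)
        then show False using AJ P(2) s(2) by blast
      qed
      then show "{\<zero>\<^bsub>Tpp\<^esub>} \<inter> S = {}" by simp
    qed
    then obtain Q where Q: "primeideal Q Tpp" "Q \<inter> S = {}" by blast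
    have iQ: "ideal Q Tpp" using Q(1) primeideal.axioms(1) by blast
    have QP: "Q \<subseteq> P"
    proof
      fix q assume qQ: "q \<in> Q"
      have qc: "q \<in> TC" using idl_carr[OF iQ qQ] .
      show "q \<in> P"
      proof (rule ccontr)
        assume "q \<notin> P"
        then have "q \<in> S" unfolding S_def using qc by (auto intro!: bexI[of _ q])
        then show False using Q(2) qQ by blast
      qed
    qed
    have "f \<in> S" unfolding S_def using f P(3) by (auto intro!: bexI[of _ "\<lambda>t. 1"])
    then have fQ: "f \<notin> Q" using Q(2) by blast
    have mQ: "maximalideal Q Tpp" using c2 Q(1) by blast
    have iP: "ideal P Tpp" using P(1) primeideal.axioms(1) by blast
    have "P \<subseteq> carrier Tpp" using idl_carr[OF iP] by auto
    then have "P = Q \<or> P = carrier Tpp" using maximalideal.I_maximal[OF mQ iP QP] by blast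
    moreover have "P \<noteq> Q" using fJ P(2) fQ by blast
    moreover have "P \<noteq> carrier Tpp" using P(3) by auto
    ultimately show False by blast
  qed
qed

lemma C17:
  assumes r: "regular_ring (Tpp::('a::topological_space \<Rightarrow> real) ring)"
  shows "\<forall>I. ideal I Tpp \<longrightarrow> (\<exists>\<M>. (\<forall>M \<in> \<M>. maximalideal M (Tpp::('a \<Rightarrow> real) ring)) \<and> I = carrier Tpp \<inter> \<Inter>\<M>)"
proof (intro allI impI)
  interpret R: cring "Tpp::('a \<Rightarrow> real) ring" by (rule cring_Tpp)
  fix I assume I: "ideal I (Tpp::('a \<Rightarrow> real) ring)"
  define \<M> where "\<M> = {M. maximalideal M (Tpp::('a \<Rightarrow> real) ring) \<and> I \<subseteq> M}"
  have "I = carrier Tpp \<inter> \<Inter>\<M>"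
  proof
    show "I \<subseteq> carrier Tpp \<inter> \<Inter>\<M>" using idl_carr[OF I] \<M>_def by auto
    show "carrier Tpp \<inter> \<Inter>\<M> \<subseteq> I"
    proof
      fix a assume a: "a \<in> carrier Tpp \<inter> \<Inter>\<M>"
      show "a \<in> I"
      proof (rule ccontr)
        assume aI: "a \<notin> I"
        have ac: "a \<in> TC" using a by simp
        obtain x where x: "x \<in> TC" "\<And>t. a t = a t * a t * x t" using regE[OF r ac] by blast
        define e where "e = (\<lambda>t. a t * x t)"
        have ec: "e \<in> TC" using ac x e_def by simp
        have ee: "(\<lambda>t. e t * e t) = e"
        proof
          fix t
          have "e t * e t = (a t * a t * x t) * x t" by (simp add: e_def algebra_simps)
          also have "\<dots> = e t" by (simp only: x(2)[of t, symmetric] e_def)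
          finally show "e t * e t = e t" .
        qed
        have aeq: "(\<lambda>t. a t * e t) = a"
        proof
          fix t
          have "a t * e t = a t * a t * x t" by (simp add: e_def mult.assoc)
          also have "\<dots> = a t" by (rule x(2)[symmetric])
          finally show "a t * e t = a t" .
        qed
        have eI: "e \<notin> I"
        proof
          assume "e \<in> I"
          then have "(\<lambda>t. a t * e t) \<in> I" using idl_lmult[OF I _ ac] by blast
          then show False using aeq aI by simp
        qed
        have oneI: "(\<lambda>t. 1) \<notin> I"
        proof
          assume "(\<lambda>t. 1) \<in> I"
          then have "I = carrier Tpp" using ideal.one_imp_carrier[OF I] by simp
          then show False using aI ac by simp
        qed
        have "\<exists>Q. primeideal Q Tpp \<and> I \<subseteq> Q \<and> Q \<inter> {\<one>\<^bsub>Tpp\<^esub>, e} = {}"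
          by (rule R.zorn_prime[OF I]) (use ec ee eI oneI in auto)
        then obtain Q where Q: "primeideal Q Tpp" "I \<subseteq> Q" "e \<notin> Q" by auto
        have "maximalideal Q Tpp" using reg_prime_max[OF r Q(1)] .
        then have "Q \<in> \<M>" using Q(2) \<M>_def by blast
        then have "a \<in> Q" using a by blast
        then have "(\<lambda>t. a t * x t) \<in> Q" using idl_rmult[OF primeideal.axioms(1)[OF Q(1)] _ x(1)] by blast
        then show False using Q(3) e_def by auto
      qed
    qed
  qed
  moreover have "\<forall>M\<in>\<M>. maximalideal M Tpp" using \<M>_def by blast
  ultimately show "\<exists>\<M>. (\<forall>M \<in> \<M>. maximalideal M (Tpp::('a \<Rightarrow> real) ring)) \<and> I = carrier Tpp \<inter> \<Inter>\<M>"
    by blast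
qed

lemma C76:
  "(\<forall>I. ideal I Tpp \<longrightarrow> (\<exists>\<M>. (\<forall>M \<in> \<M>. maximalideal M (Tpp::('a::topological_space \<Rightarrow> real) ring)) \<and> I = carrier Tpp \<inter> \<Inter>\<M>))
   \<Longrightarrow> (\<forall>I. ideal I Tpp \<longrightarrow> (\<exists>\<P>. (\<forall>P \<in> \<P>. primeideal P (Tpp::('a \<Rightarrow> real) ring)) \<and> I = carrier Tpp \<inter> \<Inter>\<P>))"
proof (intro allI impI)
  fix I assume a: "\<forall>I. ideal I Tpp \<longrightarrow> (\<exists>\<M>. (\<forall>M \<in> \<M>. maximalideal M (Tpp::('a::topological_space \<Rightarrow> real) ring)) \<and> I = carrier Tpp \<inter> \<Inter>\<M>)"
    and I: "ideal I (Tpp::('a \<Rightarrow> real) ring)"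
  obtain \<M> where M: "\<forall>M \<in> \<M>. maximalideal M (Tpp::('a \<Rightarrow> real) ring)" "I = carrier Tpp \<inter> \<Inter>\<M>"
    using a[rule_format, OF I] by blast
  have "\<forall>M \<in> \<M>. primeideal M (Tpp::('a \<Rightarrow> real) ring)"
    using M(1) cring.maximalideal_prime[OF cring_Tpp] by blast
  then show "\<exists>\<P>. (\<forall>P \<in> \<P>. primeideal P (Tpp::('a \<Rightarrow> real) ring)) \<and> I = carrier Tpp \<inter> \<Inter>\<P>"
    using M(2) by blast
qed

lemma C75:
  "(\<forall>I. ideal I Tpp \<longrightarrow> (\<exists>\<M>. (\<forall>M \<in> \<M>. maximalideal M (Tpp::('a::topological_space \<Rightarrow> real) ring)) \<and> I = carrier Tpp \<inter> \<Inter>\<M>))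
   \<Longrightarrow> (\<forall>I. ideal I Tpp \<longrightarrow> z_ideal I (Tpp::('a \<Rightarrow> real) ring))"
proof (intro allI impI)
  fix I assume a: "\<forall>I. ideal I Tpp \<longrightarrow> (\<exists>\<M>. (\<forall>M \<in> \<M>. maximalideal M (Tpp::('a::topological_space \<Rightarrow> real) ring)) \<and> I = carrier Tpp \<inter> \<Inter>\<M>)"
    and I: "ideal I (Tpp::('a \<Rightarrow> real) ring)"
  obtain \<M> where M: "\<forall>M \<in> \<M>. maximalideal M (Tpp::('a \<Rightarrow> real) ring)" "I = carrier Tpp \<inter> \<Inter>\<M>"
    using a[rule_format, OF I] by blast
  have "Mset Tpp b \<subseteq> I" if b: "b \<in> I" for b
  proof
    fix x assume x: "x \<in> Mset Tpp b"
    have xc: "x \<in> carrier Tpp" using x unfolding Mset_def by blast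
    have "x \<in> M" if "M \<in> \<M>" for M
    proof -
      have "b \<in> M" using b M(2) that by blast
      moreover have "maximalideal M Tpp" using M(1) that by blast
      ultimately show ?thesis using x unfolding Mset_def by blast
    qed
    then show "x \<in> I" using xc M(2) by blast
  qed
  then show "z_ideal I Tpp" unfolding z_ideal_def using I by blast
qed

lemma sqIdl:
  assumes f: "(f::'a::topological_space \<Rightarrow> real) \<in> TC" and fi: "f \<in> Idl\<^bsub>Tpp\<^esub> {\<lambda>t. f t * f t}"
  shows "\<exists>x\<in>TC. \<forall>t. f t = f t * f t * x t"
proof -
  have "Idl\<^bsub>Tpp\<^esub> {\<lambda>t. f t * f t} = PIdl\<^bsub>(Tpp::('a \<Rightarrow> real) ring)\<^esub> (\<lambda>t. f t * f t)"
    using cring.cgenideal_eq_genideal[OF cring_Tpp, of "\<lambda>t. f t * f t"] f by simp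
  then obtain r where r: "r \<in> TC" "f = (\<lambda>t. r t * (f t * f t))" using fi unfolding cgenideal_def by auto
  have "\<forall>t. f t = f t * f t * r t"
  proof
    fix t
    have "f t = r t * (f t * f t)" using fun_cong[OF r(2), of t] .
    also have "\<dots> = f t * f t * r t" by (simp add: mult.commute)
    finally show "f t = f t * f t * r t" .
  qed
  then show ?thesis using r(1) by blast
qed

lemma C61:
  assumes c6: "\<forall>I. ideal I Tpp \<longrightarrow> (\<exists>\<P>. (\<forall>P \<in> \<P>. primeideal P (Tpp::('a::topological_space \<Rightarrow> real) ring)) \<and> I = carrier Tpp \<inter> \<Inter>\<P>)"
  shows "regular_ring (Tpp::('a \<Rightarrow> real) ring)"
proof (rule regI)
  interpret R: cring "Tpp::('a \<Rightarrow> real) ring" by (rule cring_Tpp)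
  fix f :: "'a \<Rightarrow> real" assume f: "f \<in> Tpp_carrier"
  let ?I = "Idl\<^bsub>Tpp\<^esub> {\<lambda>t. f t * f t} :: ('a \<Rightarrow> real) set"
  have fc2: "(\<lambda>t. f t * f t) \<in> carrier Tpp" using f by simp
  have iI: "ideal ?I Tpp" using R.genideal_ideal fc2 by simp
  obtain \<P> where P: "\<forall>P\<in>\<P>. primeideal P Tpp" "?I = carrier Tpp \<inter> \<Inter>\<P>" using c6[rule_format, OF iI] by blast
  have f2: "(\<lambda>t. f t * f t) \<in> ?I" using R.genideal_self' fc2 by blast
  have "f \<in> carrier Tpp \<inter> \<Inter>\<P>"
  proof -
    have "f \<in> P" if "P \<in> \<P>" for P
    proof -
      have "(\<lambda>t. f t * f t) \<in> P" using f2 P(2) that by blast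
      then show ?thesis using primeideal.I_prime[of P Tpp f f] P(1) that f by auto
    qed
    then show ?thesis using f by auto
  qed
  then have "f \<in> ?I" using P(2) by simp
  then show "\<exists>x\<in>TC. \<forall>t. f t = f t * f t * x t" using sqIdl f by blast
qed

lemma C51:
  assumes c5: "\<forall>I. ideal I Tpp \<longrightarrow> z_ideal I (Tpp::('a::topological_space \<Rightarrow> real) ring)"
  shows "regular_ring (Tpp::('a \<Rightarrow> real) ring)"
proof (rule regI)
  interpret R: cring "Tpp::('a \<Rightarrow> real) ring" by (rule cring_Tpp)
  fix f :: "'a \<Rightarrow> real" assume f: "f \<in> Tpp_carrier"
  let ?I = "Idl\<^bsub>Tpp\<^esub> {\<lambda>t. f t * f t} :: ('a \<Rightarrow> real) set"
  have fc2: "(\<lambda>t. f t * f t) \<in> carrier Tpp" using f by simp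
  have iI: "ideal ?I Tpp" using R.genideal_ideal fc2 by simp
  have f2: "(\<lambda>t. f t * f t) \<in> ?I" using R.genideal_self' fc2 by blast
  have "Mset Tpp (\<lambda>t. f t * f t) \<subseteq> ?I" using c5 iI f2 unfolding z_ideal_def by blast
  moreover have "f \<in> Mset Tpp (\<lambda>t. f t * f t)"
  proof -
    have "f \<in> M" if "maximalideal M Tpp" "(\<lambda>t. f t * f t) \<in> M" for M
      using primeideal.I_prime[OF R.maximalideal_prime[OF that(1)], of f f] that(2) f by auto
    then show ?thesis unfolding Mset_def using f by auto
  qed
  ultimately have "f \<in> ?I" by blast
  then show "\<exists>x\<in>TC. \<forall>t. f t = f t * f t * x t" using sqIdl f by blast
qed



lemma idem_of_reg:
  fixes f x :: "'a \<Rightarrow> real"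
  assumes x: "\<And>t. f t = f t * f t * x t"
  shows "(\<lambda>t. (f t * x t) * (f t * x t)) = (\<lambda>t. f t * x t)" "(\<lambda>t. f t * (f t * x t)) = f"
proof -
  show "(\<lambda>t. (f t * x t) * (f t * x t)) = (\<lambda>t. f t * x t)"
  proof
    fix t
    have "(f t * x t) * (f t * x t) = (f t * f t * x t) * x t" by (simp add: algebra_simps)
    also have "\<dots> = f t * x t" by (simp only: x[of t, symmetric])
    finally show "(f t * x t) * (f t * x t) = f t * x t" .
  qed
  show "(\<lambda>t. f t * (f t * x t)) = f"
  proof
    fix t
    have "f t * (f t * x t) = f t * f t * x t" by (simp add: mult.assoc)
    also have "\<dots> = f t" by (rule x[symmetric])
    finally show "f t * (f t * x t) = f t" .
  qed
qed

lemma C18: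
  assumes r: "regular_ring (Tpp::('a::topological_space \<Rightarrow> real) ring)"
  shows "\<forall>f \<in> carrier (Tpp::('a \<Rightarrow> real) ring). \<forall>g \<in> carrier Tpp.
                 Idl\<^bsub>Tpp\<^esub> {f, g} = Idl\<^bsub>Tpp\<^esub> {(f \<otimes>\<^bsub>Tpp\<^esub> f) \<oplus>\<^bsub>Tpp\<^esub> (g \<otimes>\<^bsub>Tpp\<^esub> g)}"
proof (intro ballI)
  interpret R: cring "Tpp::('a \<Rightarrow> real) ring" by (rule cring_Tpp)
  fix f g :: "'a \<Rightarrow> real" assume f: "f \<in> carrier Tpp" and g: "g \<in> carrier Tpp"
  define k where "k = (\<lambda>t. f t * f t + g t * g t)"
  have keq: "(f \<otimes>\<^bsub>Tpp\<^esub> f) \<oplus>\<^bsub>Tpp\<^esub> (g \<otimes>\<^bsub>Tpp\<^esub> g) = k" by (simp add: k_def)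
  have kc: "k \<in> TC" using f g by (simp add: k_def)
  obtain x where x: "x \<in> TC" "\<And>t. k t = k t * k t * x t" using regE[OF r kc] by blast
  have kx: "k t * x t = 1" if "k t \<noteq> 0" for t using x(2)[of t] that
    by (metis mult.assoc mult_left_cancel mult.right_neutral)
  have fk: "f = (\<lambda>t. (f t * x t) * k t)" and gk: "g = (\<lambda>t. (g t * x t) * k t)"
  proof -
    have "f t = (f t * x t) * k t \<and> g t = (g t * x t) * k t" for t
    proof (cases "k t = 0")
      case True
      then have "f t = 0" "g t = 0" unfolding k_def by (simp_all add: sum_squares_eq_zero_iff)
      then show ?thesis by simp
    next
      case False
      then have "k t * x t = 1" by (rule kx)
      then show ?thesis by (metis mult.assoc mult.commute mult.right_neutral)
    qed
    then show "f = (\<lambda>t. (f t * x t) * k t)" "g = (\<lambda>t. (g t * x t) * k t)" by auto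
  qed
  have fgc: "{f, g} \<subseteq> carrier Tpp" using f g by simp
  have iA: "ideal (Idl\<^bsub>Tpp\<^esub> {f, g}) Tpp" by (rule R.genideal_ideal[OF fgc])
  have iB: "ideal (Idl\<^bsub>Tpp\<^esub> {k}) Tpp" by (rule R.genideal_ideal) (use kc in simp)
  have kB: "k \<in> Idl\<^bsub>Tpp\<^esub> {k}" by (rule R.genideal_self') (use kc in simp)
  have fA: "f \<in> Idl\<^bsub>Tpp\<^esub> {f, g}" and gA: "g \<in> Idl\<^bsub>Tpp\<^esub> {f, g}"
    using R.genideal_self[OF fgc] by auto
  have "Idl\<^bsub>Tpp\<^esub> {f, g} \<subseteq> Idl\<^bsub>Tpp\<^esub> {k}"
  proof (rule R.genideal_minimal[OF iB])
    have "(\<lambda>t. (f t * x t) * k t) \<in> Idl\<^bsub>Tpp\<^esub> {k}" using idl_lmult[OF iB kB, of "\<lambda>t. f t * x t"] f x(1) by simp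
    moreover have "(\<lambda>t. (g t * x t) * k t) \<in> Idl\<^bsub>Tpp\<^esub> {k}" using idl_lmult[OF iB kB, of "\<lambda>t. g t * x t"] g x(1) by simp
    ultimately show "{f, g} \<subseteq> Idl\<^bsub>Tpp\<^esub> {k}" using fk gk by simp
  qed
  moreover have "Idl\<^bsub>Tpp\<^esub> {k} \<subseteq> Idl\<^bsub>Tpp\<^esub> {f, g}"
  proof (rule R.genideal_minimal[OF iA])
    have "(\<lambda>t. f t * f t) \<in> Idl\<^bsub>Tpp\<^esub> {f, g}" using idl_lmult[OF iA fA, of f] f by simp
    moreover have "(\<lambda>t. g t * g t) \<in> Idl\<^bsub>Tpp\<^esub> {f, g}" using idl_lmult[OF iA gA, of g] g by simp
    ultimately have "k \<in> Idl\<^bsub>Tpp\<^esub> {f, g}" unfolding k_def using idl_add[OF iA] by blast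
    then show "{k} \<subseteq> Idl\<^bsub>Tpp\<^esub> {f, g}" by simp
  qed
  ultimately show "Idl\<^bsub>Tpp\<^esub> {f, g} = Idl\<^bsub>Tpp\<^esub> {(f \<otimes>\<^bsub>Tpp\<^esub> f) \<oplus>\<^bsub>Tpp\<^esub> (g \<otimes>\<^bsub>Tpp\<^esub> g)}"
    unfolding keq by (rule subset_antisym)
qed

lemma C81:
  assumes c8: "\<forall>f \<in> carrier (Tpp::('a::topological_space \<Rightarrow> real) ring). \<forall>g \<in> carrier Tpp.
                 Idl\<^bsub>Tpp\<^esub> {f, g} = Idl\<^bsub>Tpp\<^esub> {(f \<otimes>\<^bsub>Tpp\<^esub> f) \<oplus>\<^bsub>Tpp\<^esub> (g \<otimes>\<^bsub>Tpp\<^esub> g)}"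
  shows "regular_ring (Tpp::('a \<Rightarrow> real) ring)"
proof (rule regI)
  interpret R: cring "Tpp::('a \<Rightarrow> real) ring" by (rule cring_Tpp)
  fix f :: "'a \<Rightarrow> real" assume f: "f \<in> Tpp_carrier"
  have z: "(\<lambda>t. 0) \<in> carrier (Tpp::('a \<Rightarrow> real) ring)" by simp
  have "Idl\<^bsub>Tpp\<^esub> {f, \<lambda>t. 0} = Idl\<^bsub>Tpp\<^esub> {(f \<otimes>\<^bsub>Tpp\<^esub> f) \<oplus>\<^bsub>Tpp\<^esub> ((\<lambda>t. 0) \<otimes>\<^bsub>Tpp\<^esub> (\<lambda>t. 0))}"
    using c8 f z by simp
  moreover have "(f \<otimes>\<^bsub>Tpp\<^esub> f) \<oplus>\<^bsub>Tpp\<^esub> ((\<lambda>t. 0) \<otimes>\<^bsub>Tpp\<^esub> (\<lambda>t. 0)) = (\<lambda>t. f t * f t)" by simp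
  ultimately have e: "Idl\<^bsub>Tpp\<^esub> {f, \<lambda>t. 0} = Idl\<^bsub>Tpp\<^esub> {\<lambda>t. f t * f t}" by simp
  have "f \<in> Idl\<^bsub>Tpp\<^esub> {f, \<lambda>t. 0}" using R.genideal_self[of "{f, \<lambda>t. 0}"] f z by simp
  then have "f \<in> Idl\<^bsub>Tpp\<^esub> {\<lambda>t. f t * f t}" using e by simp
  then show "\<exists>x\<in>TC. \<forall>t. f t = f t * f t * x t" using sqIdl f by blast
qed

lemma C19:
  assumes r: "regular_ring (Tpp::('a::topological_space \<Rightarrow> real) ring)"
  shows "\<forall>f \<in> carrier (Tpp::('a \<Rightarrow> real) ring). \<exists>e \<in> carrier Tpp.
                 e \<otimes>\<^bsub>Tpp\<^esub> e = e \<and> Idl\<^bsub>Tpp\<^esub> {f} = Idl\<^bsub>Tpp\<^esub> {e}"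
proof
  interpret R: cring "Tpp::('a \<Rightarrow> real) ring" by (rule cring_Tpp)
  fix f :: "'a \<Rightarrow> real" assume f: "f \<in> carrier Tpp"
  obtain x where x: "x \<in> TC" "\<And>t. f t = f t * f t * x t" using regE[OF r] f by auto
  define e where "e = (\<lambda>t. f t * x t)"
  have ec: "e \<in> carrier Tpp" using f x by (simp add: e_def)
  have ee: "e \<otimes>\<^bsub>Tpp\<^esub> e = e" using idem_of_reg(1)[OF x(2)] by (simp add: e_def)
  have fe: "(\<lambda>t. f t * e t) = f" using idem_of_reg(2)[OF x(2)] by (simp add: e_def)
  have iE: "ideal (Idl\<^bsub>Tpp\<^esub> {e}) Tpp" by (rule R.genideal_ideal) (use ec in simp)
  have iF: "ideal (Idl\<^bsub>Tpp\<^esub> {f}) Tpp" by (rule R.genideal_ideal) (use f in simp)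
  have eE: "e \<in> Idl\<^bsub>Tpp\<^esub> {e}" by (rule R.genideal_self'[OF ec])
  have fF: "f \<in> Idl\<^bsub>Tpp\<^esub> {f}" by (rule R.genideal_self'[OF f])
  have "f \<in> Idl\<^bsub>Tpp\<^esub> {e}" using idl_lmult[OF iE eE, of f] f fe by simp
  then have s1: "Idl\<^bsub>Tpp\<^esub> {f} \<subseteq> Idl\<^bsub>Tpp\<^esub> {e}" using R.Idl_subset_ideal'[OF f ec] by simp
  have "e \<in> Idl\<^bsub>Tpp\<^esub> {f}" using idl_rmult[OF iF fF x(1)] by (simp add: e_def)
  then have s2: "Idl\<^bsub>Tpp\<^esub> {e} \<subseteq> Idl\<^bsub>Tpp\<^esub> {f}" using R.Idl_subset_ideal'[OF ec f] by simp
  show "\<exists>e \<in> carrier Tpp. e \<otimes>\<^bsub>Tpp\<^esub> e = e \<and> Idl\<^bsub>Tpp\<^esub> {f} = Idl\<^bsub>Tpp\<^esub> {e}"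
    using ec ee s1 s2 by blast
qed

lemma C91:
  assumes c9: "\<forall>f \<in> carrier (Tpp::('a::topological_space \<Rightarrow> real) ring). \<exists>e \<in> carrier Tpp.
                 e \<otimes>\<^bsub>Tpp\<^esub> e = e \<and> Idl\<^bsub>Tpp\<^esub> {f} = Idl\<^bsub>Tpp\<^esub> {e}"
  shows "regular_ring (Tpp::('a \<Rightarrow> real) ring)"
proof (rule regI)
  interpret R: cring "Tpp::('a \<Rightarrow> real) ring" by (rule cring_Tpp)
  fix f :: "'a \<Rightarrow> real" assume f: "f \<in> Tpp_carrier"
  obtain e where e: "e \<in> carrier Tpp" "e \<otimes>\<^bsub>Tpp\<^esub> e = e" "Idl\<^bsub>Tpp\<^esub> {f} = Idl\<^bsub>Tpp\<^esub> {e}"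
    using c9 f by auto
  have fc: "f \<in> carrier Tpp" using f by simp
  have "f \<in> PIdl\<^bsub>Tpp\<^esub> e"
    using R.genideal_self'[OF fc] e(3) R.cgenideal_eq_genideal[OF e(1)] by simp
  then obtain r where r: "r \<in> carrier Tpp" "f = r \<otimes>\<^bsub>Tpp\<^esub> e" unfolding PIdl_iff by blast
  have "e \<in> PIdl\<^bsub>Tpp\<^esub> f"
    using R.genideal_self'[OF e(1)] e(3) R.cgenideal_eq_genideal[OF fc] by simp
  then obtain s where s: "s \<in> carrier Tpp" "e = s \<otimes>\<^bsub>Tpp\<^esub> f" unfolding PIdl_iff by blast
  have ee: "e t * e t = e t" for t using fun_cong[OF e(2), of t] by simp
  have fr: "f t = r t * e t" for t using fun_cong[OF r(2), of t] by simp
  have es: "e t = s t * f t" for t using fun_cong[OF s(2), of t] by simp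
  have "f t = f t * f t * s t" for t
  proof -
    have "f t * f t * s t = f t * e t" by (simp add: es mult.commute mult.left_commute)
    also have "\<dots> = r t * (e t * e t)" by (simp add: fr mult.assoc)
    also have "\<dots> = f t" by (simp add: ee fr)
    finally show ?thesis by simp
  qed
  then show "\<exists>x\<in>TC. \<forall>t. f t = f t * f t * x t" using s(1) by auto
qed


theorem theorem3p3:
  fixes R :: "('a::t1_space \<Rightarrow> real) ring"
  defines "R \<equiv> Tpp"
  defines "C1 \<equiv> regular_ring R"
    and "C2 \<equiv> (\<forall>P. primeideal P R \<longrightarrow> maximalideal P R)"
    and "C3 \<equiv> (\<forall>f \<in> carrier R. \<exists>g \<in> carrier R. Zset f = UNIV - Zset g)"
    and "C4 \<equiv> (\<forall>Z \<in> (Zpp :: 'a set set). \<exists>U::'a set. cozero_set U \<and> dense_set U \<and>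
                 openin (top_of_set U) (Z \<inter> U) \<and> closedin (top_of_set U) (Z \<inter> U))"
    and "C5 \<equiv> (\<forall>I. ideal I R \<longrightarrow> z_ideal I R)"
    and "C6 \<equiv> (\<forall>I. ideal I R \<longrightarrow>
                 (\<exists>\<P>. (\<forall>P \<in> \<P>. primeideal P R) \<and> I = carrier R \<inter> \<Inter>\<P>))"
    and "C7 \<equiv> (\<forall>I. ideal I R \<longrightarrow>
                 (\<exists>\<M>. (\<forall>M \<in> \<M>. maximalideal M R) \<and> I = carrier R \<inter> \<Inter>\<M>))"
    and "C8 \<equiv> (\<forall>f \<in> carrier R. \<forall>g \<in> carrier R.
                 Idl\<^bsub>R\<^esub> {f, g} = Idl\<^bsub>R\<^esub> {(f \<otimes>\<^bsub>R\<^esub> f) \<oplus>\<^bsub>R\<^esub> (g \<otimes>\<^bsub>R\<^esub> g)})"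
    and "C9 \<equiv> (\<forall>f \<in> carrier R. \<exists>e \<in> carrier R.
                 e \<otimes>\<^bsub>R\<^esub> e = e \<and> Idl\<^bsub>R\<^esub> {f} = Idl\<^bsub>R\<^esub> {e})"
  shows "(C1 \<longleftrightarrow> C2) \<and> (C1 \<longleftrightarrow> C3) \<and> (C1 \<longleftrightarrow> C4) \<and> (C1 \<longleftrightarrow> C5) \<and>
         (C1 \<longleftrightarrow> C6) \<and> (C1 \<longleftrightarrow> C7) \<and> (C1 \<longleftrightarrow> C8) \<and> (C1 \<longleftrightarrow> C9)"
proof -
  have Rd: "R = Tpp" by (simp add: R_def)
  have c1: "C1 = regular_ring (Tpp::('a \<Rightarrow> real) ring)" unfolding C1_def Rd ..
  have c2: "C2 = (\<forall>P. primeideal P (Tpp::('a \<Rightarrow> real) ring) \<longrightarrow> maximalideal P Tpp)" unfolding C2_def Rd ..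
  have c3: "C3 = (\<forall>f\<in>Tpp_carrier::('a \<Rightarrow> real) set. \<exists>g\<in>Tpp_carrier. Zset f = UNIV - Zset g)"
    unfolding C3_def Rd by simp
  have c5: "C5 = (\<forall>I. ideal I Tpp \<longrightarrow> z_ideal I (Tpp::('a \<Rightarrow> real) ring))" unfolding C5_def Rd ..
  have c6: "C6 = (\<forall>I. ideal I Tpp \<longrightarrow> (\<exists>\<P>. (\<forall>P \<in> \<P>. primeideal P (Tpp::('a \<Rightarrow> real) ring)) \<and> I = carrier Tpp \<inter> \<Inter>\<P>))"
    unfolding C6_def Rd ..
  have c7: "C7 = (\<forall>I. ideal I Tpp \<longrightarrow> (\<exists>\<M>. (\<forall>M \<in> \<M>. maximalideal M (Tpp::('a \<Rightarrow> real) ring)) \<and> I = carrier Tpp \<inter> \<Inter>\<M>))"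
    unfolding C7_def Rd ..
  have c8: "C8 = (\<forall>f \<in> carrier (Tpp::('a \<Rightarrow> real) ring). \<forall>g \<in> carrier Tpp.
                 Idl\<^bsub>Tpp\<^esub> {f, g} = Idl\<^bsub>Tpp\<^esub> {(f \<otimes>\<^bsub>Tpp\<^esub> f) \<oplus>\<^bsub>Tpp\<^esub> (g \<otimes>\<^bsub>Tpp\<^esub> g)})"
    unfolding C8_def Rd ..
  have c9: "C9 = (\<forall>f \<in> carrier (Tpp::('a \<Rightarrow> real) ring). \<exists>e \<in> carrier Tpp.
                 e \<otimes>\<^bsub>Tpp\<^esub> e = e \<and> Idl\<^bsub>Tpp\<^esub> {f} = Idl\<^bsub>Tpp\<^esub> {e})"
    unfolding C9_def Rd ..
  have c4: "C4 = C3" unfolding C4_def c3 using C34[where 'a='a] by simp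
  have e2: "C1 \<longleftrightarrow> C2" unfolding c1 c2 using reg_prime_max C21 by blast
  have e3: "C1 \<longleftrightarrow> C3" unfolding c1 c3 by (rule C13)
  have e7: "C1 \<longleftrightarrow> C7" unfolding c1 c7 using C17 C76 C61 by blast
  have e6: "C1 \<longleftrightarrow> C6" unfolding c1 c6 using C17 C76 C61 by blast
  have e5: "C1 \<longleftrightarrow> C5" unfolding c1 c5 using C17 C75 C51 by blast
  have e8: "C1 \<longleftrightarrow> C8" unfolding c1 c8 using C18 C81 by blast
  have e9: "C1 \<longleftrightarrow> C9" unfolding c1 c9 using C19 C91 by blast
  show ?thesis using e2 e3 e7 e6 e5 e8 e9 c4 by blast
qed

end
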